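(* Let $s\geq 2$ be an integer and let $T$ be a tree with $n$ vertices in which every vertex has degree at most $s$. Let $\mathcal{W}$ denote the Wiener index of $T$, and let $\mathcal{V}_{1,s}$ be the tree obtained from $T$ by one application of the Vicsek fractal operation $V_s$. Then the Wiener index of $\mathcal{V}_{1,s}$ is $$\mathcal{W}_{\mathcal{V}_{1,s}}=3(s+1)^{2}\mathcal{W}+(s^{2}-s-2)n^{2}+(s+2)n.$$
   Context: All graphs are simple and connected. The distance $d_{uv}$ between vertices $u,v$ is the number of edges of a shortest path joining them. The Wiener index of a graph $G=(V,E)$ is $\mathcal{W}=\sum_{\{u,v\},\,u\neq v} d_{uv}=\frac12\sum_{u\in V}\sum_{v\in V}d_{uv}$ (sum over unordered pairs of distinct vertices). The Vicsek fractal operation $V_s$ applied to a tree $T$ whose maximum degree is at most $s$ produces a new tree as follows: first, every edge $uv$ of $T$ is replaced by a path $u-a-b-v$ of length $3$ through two new vertices $a,b$ (distinct for each edge); then, to every original vertex $v$ of $T$, having degree $k_v$ in $T$, one attaches $s-k_v$ new pendant vertices (leaves), so that every original vertex has degree exactly $s$. The inserted vertices $a,b$ receive no further pendant vertices. *)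

theory Defs
  imports Main
begin

definition simple_graph :: "'a set \<Rightarrow> ('a \<Rightarrow> 'a \<Rightarrow> bool) \<Rightarrow> bool" where
  "simple_graph V E \<longleftrightarrow> finite V \<and> (\<forall>u v. E u v \<longrightarrow> u \<in> V \<and> v \<in> V)
     \<and> (\<forall>u v. E u v \<longrightarrow> E v u) \<and> (\<forall>u. \<not> E u u)"

definition is_walk :: "'a set \<Rightarrow> ('a \<Rightarrow> 'a \<Rightarrow> bool) \<Rightarrow> 'a list \<Rightarrow> bool" where
  "is_walk V E xs \<longleftrightarrow> xs \<noteq> [] \<and> set xs \<subseteq> V \<and>
     (\<forall>i. Suc i < length xs \<longrightarrow> E (xs ! i) (xs ! Suc i))"

definition connected_graph :: "'a set \<Rightarrow> ('a \<Rightarrow> 'a \<Rightarrow> bool) \<Rightarrow> bool" where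
  "connected_graph V E \<longleftrightarrow>
     (\<forall>u\<in>V. \<forall>v\<in>V. \<exists>xs. is_walk V E xs \<and> hd xs = u \<and> last xs = v)"

definition has_cycle :: "'a set \<Rightarrow> ('a \<Rightarrow> 'a \<Rightarrow> bool) \<Rightarrow> bool" where
  "has_cycle V E \<longleftrightarrow> (\<exists>xs. is_walk V E xs \<and> distinct xs \<and> length xs \<ge> 3 \<and> E (last xs) (hd xs))"

definition is_tree :: "'a set \<Rightarrow> ('a \<Rightarrow> 'a \<Rightarrow> bool) \<Rightarrow> bool" where
  "is_tree V E \<longleftrightarrow> simple_graph V E \<and> V \<noteq> {} \<and> connected_graph V E \<and> \<not> has_cycle V E"

definition degree :: "'a set \<Rightarrow> ('a \<Rightarrow> 'a \<Rightarrow> bool) \<Rightarrow> 'a \<Rightarrow> nat" where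
  "degree V E v = card {u \<in> V. E v u}"

definition gdist :: "'a set \<Rightarrow> ('a \<Rightarrow> 'a \<Rightarrow> bool) \<Rightarrow> 'a \<Rightarrow> 'a \<Rightarrow> nat" where
  "gdist V E u v = (LEAST k. \<exists>xs. is_walk V E xs \<and> hd xs = u \<and> last xs = v \<and> length xs = Suc k)"

text \<open>Wiener index: sum of distances over unordered pairs of distinct vertices
  (= half the sum over all ordered pairs).\<close>
definition wiener :: "'a set \<Rightarrow> ('a \<Rightarrow> 'a \<Rightarrow> bool) \<Rightarrow> nat" where
  "wiener V E = (\<Sum>u\<in>V. \<Sum>v\<in>V. gdist V E u v) div 2"

text \<open>Vertices of the Vicsek tree V_s(T):
  Orig v   -- original vertex v;
  Sub u v  -- for an edge uv, the inserted vertex adjacent to u on the path u - Sub u v - Sub v u - v;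
  Leaf v i -- the i-th pendant vertex attached to v (i < s - deg v).\<close>
datatype 'a vvert = Orig 'a | Sub 'a 'a | Leaf 'a nat

definition vicsek_V :: "nat \<Rightarrow> 'a set \<Rightarrow> ('a \<Rightarrow> 'a \<Rightarrow> bool) \<Rightarrow> 'a vvert set" where
  "vicsek_V s V E = Orig ` V \<union> {Sub u v | u v. E u v}
     \<union> {Leaf v i | v i. v \<in> V \<and> i < s - degree V E v}"

fun vicsek_E :: "nat \<Rightarrow> 'a set \<Rightarrow> ('a \<Rightarrow> 'a \<Rightarrow> bool) \<Rightarrow> 'a vvert \<Rightarrow> 'a vvert \<Rightarrow> bool" where
  "vicsek_E s V E (Orig u) (Sub u' v) = (u = u' \<and> E u v)"
| "vicsek_E s V E (Sub u' v) (Orig u) = (u = u' \<and> E u v)"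
| "vicsek_E s V E (Sub u v) (Sub v' u') = (u = u' \<and> v = v' \<and> E u v)"
| "vicsek_E s V E (Orig v) (Leaf v' i) = (v = v' \<and> v \<in> V \<and> i < s - degree V E v)"
| "vicsek_E s V E (Leaf v' i) (Orig v) = (v = v' \<and> v \<in> V \<and> i < s - degree V E v)"
| "vicsek_E s V E _ _ = False"

end

theory Submission
  imports Defs
begin



lemma is_walk_single: "x \<in> V \<Longrightarrow> is_walk V E [x]"
  by (simp add: is_walk_def)

lemma is_walk_snoc:
  assumes "is_walk V E xs" "y \<in> V" "E (last xs) y"
  shows "is_walk V E (xs @ [y])"
  unfolding is_walk_def
proof (intro conjI allI impI)
  show "xs @ [y] \<noteq> []" by simp
  show "set (xs @ [y]) \<subseteq> V" using assms by (auto simp: is_walk_def)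
  fix i assume i: "Suc i < length (xs @ [y])"
  show "E ((xs @ [y]) ! i) ((xs @ [y]) ! Suc i)"
  proof (cases "Suc i < length xs")
    case True thus ?thesis using assms(1) by (auto simp: is_walk_def nth_append)
  next
    case False
    hence "Suc i = length xs" using i by simp
    moreover have "xs \<noteq> []" using assms(1) by (simp add: is_walk_def)
    ultimately have "i = length xs - 1" by simp
    thus ?thesis using assms(3) \<open>xs \<noteq> []\<close> \<open>Suc i = length xs\<close> by (simp add: nth_append last_conv_nth)
  qed
qed

lemma is_walk_append:
  assumes "is_walk V E xs" "is_walk V E ys" "E (last xs) (hd ys)"
  shows "is_walk V E (xs @ ys)"
  using assms(2,3)
proof (induction ys rule: rev_induct)
  case Nil thus ?case by (simp add: is_walk_def)
next
  case (snoc y ys)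
  show ?case
  proof (cases "ys = []")
    case True
    have "y \<in> V" using snoc.prems(1) True by (simp add: is_walk_def)
    moreover have "E (last xs) y" using snoc.prems(2) True by simp
    ultimately have "is_walk V E (xs @ [y])" by (rule is_walk_snoc[OF assms(1)])
    thus ?thesis using True by simp
  next
    case False
    have wpre: "E ((ys @ [y]) ! i) ((ys @ [y]) ! Suc i)" if "Suc i < length (ys @ [y])" for i
      using snoc.prems(1) that unfolding is_walk_def by blast
    have wys: "is_walk V E ys" unfolding is_walk_def
    proof (intro conjI allI impI)
      show "ys \<noteq> []" by fact
      show "set ys \<subseteq> V" using snoc.prems(1) by (auto simp: is_walk_def)
      fix i assume i: "Suc i < length ys"
      hence "E ((ys @ [y]) ! i) ((ys @ [y]) ! Suc i)" using wpre by simp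
      thus "E (ys ! i) (ys ! Suc i)" using i by (simp add: nth_append)
    qed
    have yV: "y \<in> V" using snoc.prems(1) by (simp add: is_walk_def)
    have "is_walk V E (xs @ ys)" using snoc.IH[OF wys] snoc.prems False by simp
    moreover have "E (last ys) y"
    proof -
      define k where "k = length ys - 1"
      have k: "Suc k = length ys" using False by (simp add: k_def)
      hence "Suc k < length (ys @ [y])" by simp
      from wpre[OF this] have "E ((ys @ [y]) ! k) ((ys @ [y]) ! Suc k)" .
      thus ?thesis using k False by (simp add: nth_append last_conv_nth k_def)
    qed
    moreover have "last (xs @ ys) = last ys" using False by simp
    ultimately have "is_walk V E ((xs @ ys) @ [y])" using yV by (intro is_walk_snoc) auto
    thus ?thesis by simp
  qed
qed

lemma is_walk_take:
  assumes "is_walk V E xs" "0 < k" 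
  shows "is_walk V E (take k xs)"
  using assms unfolding is_walk_def by (auto dest: in_set_takeD)

lemma is_walk_rev:
  assumes "is_walk V E xs" "\<forall>u v. E u v \<longrightarrow> E v u"
  shows "is_walk V E (rev xs)"
  unfolding is_walk_def
proof (intro conjI allI impI)
  show "rev xs \<noteq> []" "set (rev xs) \<subseteq> V" using assms(1) by (auto simp: is_walk_def)
  fix i assume i: "Suc i < length (rev xs)"
  define j where "j = length xs - Suc (Suc i)"
  have j: "Suc j = length xs - Suc i" "Suc j < length xs" using i by (auto simp: j_def)
  have "E (xs ! j) (xs ! Suc j)" using assms(1) j(2) unfolding is_walk_def by blast
  hence "E (xs ! Suc j) (xs ! j)" using assms(2) by blast
  moreover have "rev xs ! i = xs ! Suc j" using i j by (simp add: rev_nth)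
  moreover have "rev xs ! Suc i = xs ! j" using i j by (simp add: rev_nth j_def)
  ultimately show "E (rev xs ! i) (rev xs ! Suc i)" by simp
qed

lemma is_walk_map_upt:
  assumes "\<forall>t\<le>k. f t \<in> V" "\<forall>t<k. E (f t) (f (Suc t))"
  shows "is_walk V E (map f [0..<Suc k])"
  using assms unfolding is_walk_def by (auto simp del: upt_Suc)

lemma walk_bound:
  assumes "is_walk V E xs" "hd xs = x" "\<forall>y z. E y z \<longrightarrow> g z \<le> g y + 1" "g x = 0"
  shows "\<forall>i<length xs. g (xs ! i) \<le> i"
proof (intro allI impI)
  fix i assume "i < length xs"
  thus "g (xs ! i) \<le> i"
  proof (induction i)
    case 0 thus ?case using assms by (cases xs) auto
  next
    case (Suc i)
    hence "E (xs ! i) (xs ! Suc i)" using assms(1) by (simp add: is_walk_def)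
    thus ?case using Suc assms(3) by fastforce
  qed
qed

lemma gdist_char:
  assumes sym: "\<forall>u v. E u v \<longrightarrow> E v u"
    and inV: "\<forall>u v. E u v \<longrightarrow> u \<in> V \<and> v \<in> V"
    and xV: "x \<in> V"
    and g0: "g x = 0"
    and lip: "\<forall>y z. E y z \<longrightarrow> g z \<le> g y + 1"
    and desc: "\<forall>y\<in>V. y \<noteq> x \<longrightarrow> (\<exists>z. E y z \<and> g z + 1 = g y)"
    and yV: "y \<in> V"
  shows "gdist V E x y = g y"
proof -
  have ex: "\<exists>xs. is_walk V E xs \<and> hd xs = x \<and> last xs = y \<and> length xs = Suc (g y)"
    if "y \<in> V" for y
    using that
  proof (induction "g y" arbitrary: y)
    case 0
    have "y = x"
    proof (rule ccontr)
      assume "y \<noteq> x"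
      then obtain z where "g z + 1 = g y" using desc 0 by blast
      thus False using 0 by simp
    qed
    thus ?case using xV g0 by (intro exI[of _ "[x]"]) (simp add: is_walk_def)
  next
    case (Suc n)
    have "y \<noteq> x" using Suc g0 by auto
    then obtain z where z: "E y z" "g z + 1 = g y" using desc Suc by blast
    have zV: "z \<in> V" using inV z by blast
    obtain xs where xs: "is_walk V E xs" "hd xs = x" "last xs = z" "length xs = Suc (g z)"
      using Suc(1)[of z] zV z Suc(2) by auto
    have "is_walk V E (xs @ [y])" using xs z sym Suc.prems by (intro is_walk_snoc) auto
    thus ?case using xs z by (intro exI[of _ "xs @ [y]"]) (auto simp: is_walk_def)
  qed
  have lb: "g y \<le> k" if "is_walk V E xs" "hd xs = x" "last xs = y" "length xs = Suc k" for xs k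
  proof -
    have "g (xs ! k) \<le> k" using walk_bound[OF that(1,2) lip g0] that(4) by simp
    moreover have "xs ! k = y"
    proof -
      have "xs \<noteq> []" using that(4) by auto
      hence "last xs = xs ! (length xs - 1)" by (rule last_conv_nth)
      thus ?thesis using that(3,4) by simp
    qed
    ultimately show ?thesis by simp
  qed
  show ?thesis unfolding gdist_def
    apply (rule Least_equality)
    using ex[OF yV] apply blast
    using lb by blast
qed




locale tr =
  fixes V :: "'a set" and E :: "'a \<Rightarrow> 'a \<Rightarrow> bool"
  assumes tree: "is_tree V E"
begin

abbreviation d where "d \<equiv> gdist V E"

lemma finV: "finite V" using tree by (simp add: is_tree_def simple_graph_def)
lemma inV: "E u v \<Longrightarrow> u \<in> V \<and> v \<in> V" using tree by (simp add: is_tree_def simple_graph_def)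
lemma symE: "E u v \<Longrightarrow> E v u" using tree by (simp add: is_tree_def simple_graph_def)
lemma irr: "\<not> E u u" using tree by (simp add: is_tree_def simple_graph_def)
lemma conn: "connected_graph V E" using tree by (simp add: is_tree_def)
lemma nocyc: "\<not> has_cycle V E" using tree by (simp add: is_tree_def)

lemma walk_ex:
  assumes "x \<in> V" "y \<in> V"
  shows "\<exists>xs. is_walk V E xs \<and> hd xs = x \<and> last xs = y \<and> length xs = Suc (d x y)"
proof -
  obtain xs where xs: "is_walk V E xs" "hd xs = x" "last xs = y"
    using conn assms unfolding connected_graph_def by blast
  hence "\<exists>k xs. is_walk V E xs \<and> hd xs = x \<and> last xs = y \<and> length xs = Suc k"
    by (intro exI[of _ "length xs - 1"] exI[of _ xs]) (auto simp: is_walk_def)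
  thus ?thesis unfolding gdist_def by (rule LeastI_ex)
qed

lemma d_le:
  assumes "is_walk V E xs" "hd xs = x" "last xs = y"
  shows "d x y \<le> length xs - 1"
proof -
  have l: "length xs = Suc (length xs - 1)" using assms(1) by (cases xs) (auto simp: is_walk_def)
  show ?thesis unfolding gdist_def by (rule Least_le) (use assms l in blast)
qed

lemma d_refl: "x \<in> V \<Longrightarrow> d x x = 0"
  using d_le[of "[x]" x x] by (simp add: is_walk_def)

lemma d_zero:
  assumes "x \<in> V" "y \<in> V" "d x y = 0" shows "x = y"
proof -
  obtain xs where "is_walk V E xs" "hd xs = x" "last xs = y" "length xs = Suc 0"
    using walk_ex[OF assms(1,2)] assms(3) by auto
  thus ?thesis by (cases xs) auto
qed

lemma d_sym_le:
  assumes "x \<in> V" "y \<in> V" shows "d y x \<le> d x y"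
proof -
  obtain xs where xs: "is_walk V E xs" "hd xs = x" "last xs = y" "length xs = Suc (d x y)"
    using walk_ex[OF assms] by auto
  have "is_walk V E (rev xs)" using is_walk_rev[OF xs(1)] symE by blast
  moreover have "hd (rev xs) = y" "last (rev xs) = x" using xs
    by (auto simp: hd_rev last_rev)
  ultimately show ?thesis using d_le[of "rev xs" y x] xs(4) by simp
qed

lemma d_sym: "x \<in> V \<Longrightarrow> y \<in> V \<Longrightarrow> d x y = d y x"
  using d_sym_le by (simp add: le_antisym)

lemma d_lip:
  assumes "x \<in> V" "E y z" shows "d x z \<le> d x y + 1"
proof -
  have yz: "y \<in> V" "z \<in> V" using inV assms by auto
  obtain xs where xs: "is_walk V E xs" "hd xs = x" "last xs = y" "length xs = Suc (d x y)"
    using walk_ex[OF assms(1) yz(1)] by auto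
  have "is_walk V E (xs @ [z])" using is_walk_snoc[OF xs(1) yz(2)] xs assms by simp
  moreover have "hd (xs @ [z]) = x" using xs by (cases xs) auto
  ultimately show ?thesis using d_le[of "xs @ [z]" x z] xs(4) by simp
qed

lemma d_desc:
  assumes "x \<in> V" "y \<in> V" "x \<noteq> y"
  shows "\<exists>z. E y z \<and> d x z + 1 = d x y"
proof -
  obtain xs where xs: "is_walk V E xs" "hd xs = x" "last xs = y" "length xs = Suc (d x y)"
    using walk_ex[OF assms(1,2)] by auto
  define k where "k = d x y"
  have k0: "k \<noteq> 0" using d_zero assms k_def by blast
  define z where "z = xs ! (k - 1)"
  have "xs \<noteq> []" using xs(4) by auto
  hence "last xs = xs ! (length xs - 1)" by (rule last_conv_nth)
  hence yk: "xs ! k = y" using xs(3,4) k_def by simp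
  have "Suc (k - 1) < length xs" using k0 xs(4) k_def by simp
  hence "E (xs ! (k - 1)) (xs ! Suc (k - 1))" using xs(1) unfolding is_walk_def by blast
  moreover have "Suc (k - 1) = k" using k0 by simp
  ultimately have "E z y" using yk unfolding z_def by simp
  hence ezy: "E y z" by (rule symE)
  have w: "is_walk V E (take k xs)" using is_walk_take[OF xs(1)] k0 by simp
  have "hd (take k xs) = x" using xs k0 by (cases xs) auto
  moreover have "take k xs = take (k - 1) xs @ [xs ! (k - 1)]"
    using take_Suc_conv_app_nth[of "k - 1" xs] k0 xs(4) k_def by simp
  hence "last (take k xs) = z" unfolding z_def by simp
  ultimately have "d x z \<le> k - 1" using d_le[OF w] xs(4) k_def \<open>last (take k xs) = z\<close> by simp
  moreover have "d x y \<le> d x z + 1" using d_lip[OF assms(1) ezy[THEN symE]] .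
  ultimately show ?thesis using ezy k_def k0 by (intro exI[of _ z]) simp
qed

lemma d_tri:
  assumes "x \<in> V" "y \<in> V" "z \<in> V" shows "d x z \<le> d x y + d y z"
  using assms(3)
proof (induction "d y z" arbitrary: z)
  case 0
  hence "z = y" using d_zero[OF assms(2) 0(2)] by simp
  thus ?case by simp
next
  case (Suc n)
  have "y \<noteq> z" using Suc(2) d_refl[OF assms(2)] by auto
  then obtain w where w: "E z w" "d y w + 1 = d y z" using d_desc[OF assms(2) Suc.prems] by blast
  have "w \<in> V" using inV w by blast
  hence "d x w \<le> d x y + d y w" using Suc w by simp
  moreover have "d x z \<le> d x w + 1" using d_lip[OF assms(1) symE[OF w(1)]] .
  ultimately show ?case using w by simp
qed

definition par where "par r x = (SOME y. E x y \<and> d r y + 1 = d r x)"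

lemma par_prop:
  assumes "r \<in> V" "x \<in> V" "x \<noteq> r"
  shows "E x (par r x) \<and> d r (par r x) + 1 = d r x"
proof -
  obtain z where "E x z \<and> d r z + 1 = d r x" using d_desc[OF assms(1,2)] assms(3) by auto
  thus ?thesis unfolding par_def by (rule someI)
qed

definition anc where "anc r c k = (par r ^^ k) c"

lemma anc_prop:
  assumes "r \<in> V" "c \<in> V" "k \<le> d r c"
  shows "anc r c k \<in> V \<and> d r (anc r c k) + k = d r c"
  using assms(3)
proof (induction k)
  case 0 thus ?case using assms by (simp add: anc_def)
next
  case (Suc k)
  hence IH: "anc r c k \<in> V" "d r (anc r c k) + k = d r c" by auto
  have "anc r c k \<noteq> r" using IH Suc.prems d_refl[OF assms(1)] by auto
  hence "E (anc r c k) (par r (anc r c k)) \<and> d r (par r (anc r c k)) + 1 = d r (anc r c k)"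
    using par_prop[OF assms(1) IH(1)] by blast
  thus ?case using IH inV by (auto simp: anc_def)
qed

lemma anc_edge:
  assumes "r \<in> V" "c \<in> V" "k < d r c"
  shows "E (anc r c k) (anc r c (Suc k))"
proof -
  have IH: "anc r c k \<in> V" "d r (anc r c k) + k = d r c" using anc_prop[OF assms(1,2)] assms(3) by auto
  have "anc r c k \<noteq> r" using IH assms(3) d_refl[OF assms(1)] by auto
  thus ?thesis using par_prop[OF assms(1) IH(1)] by (simp add: anc_def)
qed

lemma anc0: "anc r c 0 = c" by (simp add: anc_def)

lemma bad_cycle:
  assumes rV: "r \<in> V" and bV: "b \<in> V" and c1V: "c1 \<in> V" and c2V: "c2 \<in> V"
    and e1: "E b c1" and e2: "E b c2" and ne: "c1 \<noteq> c2"
    and le1: "d r c1 \<le> d r b" and le2: "d r c2 \<le> d r b"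
  shows False
proof -
  define A where "A = anc r c1"
  define B where "B = anc r c2"
  define n1 where "n1 = d r c1"
  define n2 where "n2 = d r c2"
  have AV: "\<And>t. t \<le> n1 \<Longrightarrow> A t \<in> V \<and> d r (A t) + t = n1"
    using anc_prop[OF rV c1V] unfolding A_def n1_def by blast
  have BV: "\<And>t. t \<le> n2 \<Longrightarrow> B t \<in> V \<and> d r (B t) + t = n2"
    using anc_prop[OF rV c2V] unfolding B_def n2_def by blast
  have AE: "\<And>t. t < n1 \<Longrightarrow> E (A t) (A (Suc t))"
    using anc_edge[OF rV c1V] unfolding A_def n1_def by blast
  have BE: "\<And>t. t < n2 \<Longrightarrow> E (B t) (B (Suc t))"
    using anc_edge[OF rV c2V] unfolding B_def n2_def by blast
  have Ainj: "\<And>t1 t2. t1 \<le> n1 \<Longrightarrow> t2 \<le> n1 \<Longrightarrow> A t1 = A t2 \<Longrightarrow> t1 = t2"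
  proof -
    fix t1 t2 assume a: "t1 \<le> n1" "t2 \<le> n1" "A t1 = A t2"
    show "t1 = t2" using AV[OF a(1)] AV[OF a(2)] a(3) by simp
  qed
  have Binj: "\<And>t1 t2. t1 \<le> n2 \<Longrightarrow> t2 \<le> n2 \<Longrightarrow> B t1 = B t2 \<Longrightarrow> t1 = t2"
  proof -
    fix t1 t2 assume a: "t1 \<le> n2" "t2 \<le> n2" "B t1 = B t2"
    show "t1 = t2" using BV[OF a(1)] BV[OF a(2)] a(3) by simp
  qed
  define P where "P i = (\<exists>j\<le>n2. A i = B j)" for i
  have "A n1 = r" using AV[of n1] d_zero[OF rV] by auto
  moreover have "B n2 = r" using BV[of n2] d_zero[OF rV] by auto
  ultimately have Pn1: "P n1" unfolding P_def by auto
  define i where "i = (LEAST i. P i)"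
  have Pi: "P i" unfolding i_def using Pn1 by (rule LeastI)
  have in1: "i \<le> n1" unfolding i_def using Pn1 by (rule Least_le)
  have notP: "\<And>t. t < i \<Longrightarrow> \<not> P t" unfolding i_def using not_less_Least by blast
  obtain j where j: "j \<le> n2" "A i = B j" using Pi unfolding P_def by blast
  define g where "g t = (if t < i then A t else B (j - (t - i)))" for t
  define xs where "xs = [b] @ map g [0..<Suc (i + j)]"
  have A0: "A 0 = c1" and B0: "B 0 = c2" by (simp_all add: A_def B_def anc0)
  have g0: "g 0 = c1" using j A0 by (cases "i = 0") (auto simp: g_def)
  have gV: "\<forall>t\<le>i+j. g t \<in> V" using AV BV in1 j by (auto simp: g_def)
  have gE: "\<forall>t<i+j. E (g t) (g (Suc t))"
  proof (intro allI impI)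
    fix t assume t: "t < i + j"
    consider "Suc t < i" | "Suc t = i" | "i \<le> t" by linarith
    thus "E (g t) (g (Suc t))"
    proof cases
      case 1 thus ?thesis using AE in1 by (simp add: g_def)
    next
      case 2 thus ?thesis using AE[of t] in1 j by (auto simp: g_def)
    next
      case 3
      define m where "m = i + j - Suc t"
      have m: "j - (t - i) = Suc m" "j - (Suc t - i) = m" "m < n2" using 3 t j unfolding m_def by auto
      thus ?thesis using BE[of m] 3 symE by (auto simp: g_def)
    qed
  qed
  have w1: "is_walk V E (map g [0..<Suc (i + j)])" using is_walk_map_upt[OF gV gE] .
  have wxs: "is_walk V E xs" unfolding xs_def
  proof (rule is_walk_append)
    show "is_walk V E [b]" using bV by (rule is_walk_single)
    show "is_walk V E (map g [0..<Suc (i + j)])" by (rule w1)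
    have "hd (map g [0..<Suc (i + j)]) = g 0" by (simp add: hd_map hd_upt del: upt_Suc)
    thus "E (last [b]) (hd (map g [0..<Suc (i + j)]))" using e1 g0 by simp
  qed
  have ginj: "inj_on g {0..<Suc (i + j)}"
  proof (rule inj_onI)
    fix t1 t2 assume t1: "t1 \<in> {0..<Suc (i + j)}" and t2: "t2 \<in> {0..<Suc (i + j)}" and eq: "g t1 = g t2"
    have cross: False if "s1 < i" "i \<le> s2" "s2 \<le> i + j" "A s1 = B (j - (s2 - i))" for s1 s2
    proof -
      have "j - (s2 - i) \<le> n2" using j by simp
      thus False using notP[OF that(1)] that(4) unfolding P_def by blast
    qed
    show "t1 = t2"
    proof (cases "t1 < i")
      case True note T1 = True
      show ?thesis
      proof (cases "t2 < i")
        case True thus ?thesis using T1 eq Ainj[of t1 t2] in1 by (simp add: g_def)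
      next
        case False thus ?thesis using cross[of t1 t2] T1 eq t2 by (simp add: g_def)
      qed
    next
      case False note F1 = False
      show ?thesis
      proof (cases "t2 < i")
        case True thus ?thesis using cross[of t2 t1] F1 eq t1 by (simp add: g_def)
      next
        case False
        hence "j - (t1 - i) = j - (t2 - i)" using F1 eq Binj[of "j - (t1 - i)" "j - (t2 - i)"] j
          by (simp add: g_def)
        thus ?thesis using False F1 t1 t2 by auto
      qed
    qed
  qed
  have bnot: "b \<notin> g ` {0..<Suc (i + j)}"
  proof
    assume "b \<in> g ` {0..<Suc (i + j)}"
    then obtain t where t0: "t \<in> {0..<Suc (i + j)}" "b = g t" by blast
    hence t: "t \<le> i + j" "g t = b" by auto
    show False
    proof (cases "t < i")
      case True
      hence "A t = b" using t by (simp add: g_def)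
      thus False
      proof (cases "t = 0")
        case True thus False using \<open>A t = b\<close> A0 e1 irr by auto
      next
        case False
        have "t \<le> n1" using \<open>t < i\<close> in1 by simp
        hence "d r b + t = n1" using AV[of t] \<open>A t = b\<close> by simp
        thus False using le1 n1_def False by simp
      qed
    next
      case False
      define m where "m = j - (t - i)"
      have "B m = b" "m \<le> n2" using t False j unfolding m_def by (auto simp: g_def)
      thus False
      proof (cases "m = 0")
        case True thus False using \<open>B m = b\<close> B0 e2 irr by auto
      next
        case False
        have "d r b + m = n2" using BV[of m] \<open>B m = b\<close> \<open>m \<le> n2\<close> by simp
        thus False using le2 n2_def False by simp
      qed
    qed
  qed
  have dxs: "distinct xs" unfolding xs_def using ginj bnot by (simp add: distinct_map del: upt_Suc)
  have ij: "i + j \<noteq> 0"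
  proof
    assume "i + j = 0"
    hence "i = 0" "j = 0" by auto
    thus False using j(2) A0 B0 ne by simp
  qed
  have "length xs = Suc (Suc (i + j))" unfolding xs_def by simp
  hence len: "length xs \<ge> 3" using ij by linarith
  have "last xs = last (map g [0..<Suc (i + j)])" unfolding xs_def by simp
  also have "\<dots> = g (i + j)" by (subst last_map) (simp_all del: upt_Suc)
  also have "\<dots> = c2" using B0 ij by (simp add: g_def)
  finally have "E (last xs) (hd xs)" using symE[OF e2] by (simp add: xs_def)
  hence "has_cycle V E" unfolding has_cycle_def using wxs dxs len by blast
  thus False using nocyc by simp
qed

lemma par_unique:
  assumes "r \<in> V" "E x y" "E x z" "d r y < d r x" "d r z < d r x"
  shows "y = z"
proof (rule ccontr)
  assume ne: "y \<noteq> z"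
  have V3: "x \<in> V" "y \<in> V" "z \<in> V" using inV assms(2,3) by auto
  show False using bad_cycle[OF assms(1) V3 assms(2,3) ne] assms(4,5) by simp
qed

lemma edge_step:
  assumes rV: "r \<in> V" and e: "E x y"
  shows "d r y = d r x + 1 \<or> d r x = d r y + 1"
proof (rule ccontr)
  assume nn: "\<not> ?thesis"
  have xy: "x \<in> V" "y \<in> V" using inV e by auto
  have l1: "d r y \<le> d r x + 1" using d_lip[OF rV e] .
  have l2: "d r x \<le> d r y + 1" using d_lip[OF rV symE[OF e]] .
  have eq: "d r x = d r y" using nn l1 l2 by linarith
  have "x \<noteq> r"
  proof
    assume "x = r"
    hence "d r y = 0" using eq d_refl rV by simp
    hence "y = r" using d_zero rV xy by blast
    thus False using \<open>x = r\<close> e irr by simp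
  qed
  then obtain p where p: "E x p" "d r p + 1 = d r x" using par_prop[OF rV xy(1)] by blast
  have "p \<noteq> y" using p eq by auto
  have pV: "p \<in> V" using inV p(1) by blast
  show False using bad_cycle[OF rV xy(1) pV xy(2) p(1) e \<open>p \<noteq> y\<close>] p eq by simp
qed

end



fun fo :: "('a \<Rightarrow> 'a \<Rightarrow> nat) \<Rightarrow> 'a \<Rightarrow> 'a vvert \<Rightarrow> nat" where
  "fo dd a (Orig c) = 3 * dd a c"
| "fo dd a (Leaf c i) = 3 * dd a c + 1"
| "fo dd a (Sub u v) = min (3 * dd a u + 1) (3 * dd a v + 2)"

fun Dm :: "('a \<Rightarrow> 'a \<Rightarrow> nat) \<Rightarrow> 'a vvert \<Rightarrow> 'a vvert \<Rightarrow> nat" where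
  "Dm dd (Orig a) y = fo dd a y"
| "Dm dd (Leaf a i) y = (if y = Leaf a i then 0 else fo dd a y + 1)"
| "Dm dd (Sub u v) y = (if y = Sub u v then 0 else if y = Sub v u then 1
      else min (fo dd u y + 1) (fo dd v y + 2))"

locale vt = tr +
  fixes s :: nat
  assumes degs: "\<forall>v\<in>V. degree V E v \<le> s"
begin

abbreviation VH where "VH \<equiv> vicsek_V s V E"
abbreviation EH where "EH \<equiv> vicsek_E s V E"

lemma VH_Orig[simp]: "Orig a \<in> VH \<longleftrightarrow> a \<in> V" by (auto simp: vicsek_V_def)
lemma VH_Sub[simp]: "Sub u v \<in> VH \<longleftrightarrow> E u v" by (auto simp: vicsek_V_def)
lemma VH_Leaf[simp]: "Leaf v i \<in> VH \<longleftrightarrow> v \<in> V \<and> i < s - degree V E v" by (auto simp: vicsek_V_def)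

lemma EH_sym: "EH x y \<Longrightarrow> EH y x"
  by (cases x; cases y) (auto intro: symE)

lemma EH_in: "EH x y \<Longrightarrow> x \<in> VH \<and> y \<in> VH"
  by (cases x; cases y) (auto dest: inV intro: symE)

lemma nbr_Leaf: "EH (Leaf a i) z \<Longrightarrow> z = Orig a"
  by (cases z) auto

lemma nbr_Sub: "EH (Sub u v) z \<Longrightarrow> z = Orig u \<or> z = Sub v u"
  by (cases z) auto

lemma F0:
  assumes "a \<in> V" "y \<in> VH" "fo d a y = 0" shows "y = Orig a"
proof (cases y)
  case (Orig c)
  hence "d a c = 0" "c \<in> V" using assms by auto
  thus ?thesis using d_zero[OF assms(1)] Orig by auto
qed (use assms in auto)

lemma Flip:
  assumes aV: "a \<in> V" and e: "EH y z" shows "fo d a z \<le> fo d a y + 1"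
proof (cases y)
  case (Orig u)
  then show ?thesis using e by (cases z) auto
next
  case (Leaf u i)
  then show ?thesis using e by (cases z) auto
next
  case (Sub u v)
  show ?thesis
  proof (cases z)
    case (Orig w)
    hence "w = u" "E u v" using e Sub by auto
    hence "d a u \<le> d a v + 1" using d_lip[OF aV symE] by blast
    thus ?thesis using Orig Sub \<open>w = u\<close> by simp
  next
    case (Sub w x)
    thus ?thesis using e \<open>y = Sub u v\<close> by auto
  next
    case (Leaf w i)
    thus ?thesis using e \<open>y = Sub u v\<close> by auto
  qed
qed

lemma Fdesc:
  assumes aV: "a \<in> V" and yV: "y \<in> VH" and ne: "y \<noteq> Orig a"
  shows "\<exists>z. EH y z \<and> fo d a z + 1 = fo d a y"
proof (cases y)
  case (Orig b)
  hence bV: "b \<in> V" "b \<noteq> a" using yV ne by auto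
  then obtain c where c: "E b c" "d a c + 1 = d a b" using d_desc[OF aV bV(1)] by metis
  have "EH y (Sub b c)" using Orig c by simp
  moreover have "fo d a (Sub b c) + 1 = fo d a y" using Orig c by simp
  ultimately show ?thesis by blast
next
  case (Leaf v i)
  hence "EH y (Orig v)" using yV by simp
  moreover have "fo d a (Orig v) + 1 = fo d a y" using Leaf by simp
  ultimately show ?thesis by blast
next
  case (Sub u v)
  hence e: "E u v" using yV by simp
  show ?thesis
  proof (cases "d a u \<le> d a v")
    case True
    hence "EH y (Orig u)" "fo d a (Orig u) + 1 = fo d a y" using Sub e by auto
    thus ?thesis by blast
  next
    case False
    have "d a u \<le> d a v + 1" using d_lip[OF aV symE[OF e]] .
    hence "d a u = d a v + 1" using False by simp
    hence "EH y (Sub v u)" "fo d a (Sub v u) + 1 = fo d a y" using Sub e by auto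
    thus ?thesis by blast
  qed
qed

lemma gH_Orig:
  assumes aV: "a \<in> V" and yV: "y \<in> VH"
  shows "gdist VH EH (Orig a) y = Dm d (Orig a) y"
proof -
  have "gdist VH EH (Orig a) y = fo d a y"
  proof (rule gdist_char)
    show "\<forall>u v. EH u v \<longrightarrow> EH v u" using EH_sym by blast
    show "\<forall>u v. EH u v \<longrightarrow> u \<in> VH \<and> v \<in> VH" using EH_in by blast
    show "Orig a \<in> VH" using aV by simp
    show "fo d a (Orig a) = 0" using d_refl[OF aV] by simp
    show "\<forall>y z. EH y z \<longrightarrow> fo d a z \<le> fo d a y + 1" using Flip[OF aV] by blast
    show "\<forall>y\<in>VH. y \<noteq> Orig a \<longrightarrow> (\<exists>z. EH y z \<and> fo d a z + 1 = fo d a y)"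
      using Fdesc[OF aV] by blast
    show "y \<in> VH" by fact
  qed
  thus ?thesis by simp
qed

lemma gH_Leaf:
  assumes xV: "Leaf a i \<in> VH" and yV: "y \<in> VH"
  shows "gdist VH EH (Leaf a i) y = Dm d (Leaf a i) y"
proof -
  define x where "x = Leaf a i"
  have aV: "a \<in> V" using xV by simp
  define g where "g y = (if y = x then 0 else fo d a y + 1)" for y
  have "gdist VH EH x y = g y"
  proof (rule gdist_char)
    show "\<forall>u v. EH u v \<longrightarrow> EH v u" using EH_sym by blast
    show "\<forall>u v. EH u v \<longrightarrow> u \<in> VH \<and> v \<in> VH" using EH_in by blast
    show "x \<in> VH" using xV x_def by simp
    show "g x = 0" by (simp add: g_def)
    show "\<forall>y z. EH y z \<longrightarrow> g z \<le> g y + 1"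
    proof (intro allI impI)
      fix y z assume e: "EH y z"
      show "g z \<le> g y + 1"
      proof (cases "z = x")
        case True thus ?thesis by (simp add: g_def)
      next
        case False
        show ?thesis
        proof (cases "y = x")
          case True
          hence "z = Orig a" using nbr_Leaf e x_def by blast
          thus ?thesis using True d_refl[OF aV] by (simp add: g_def x_def)
        next
          case False
          thus ?thesis using Flip[OF aV e] \<open>z \<noteq> x\<close> by (simp add: g_def)
        qed
      qed
    qed
    show "\<forall>y\<in>VH. y \<noteq> x \<longrightarrow> (\<exists>z. EH y z \<and> g z + 1 = g y)"
    proof (intro ballI impI)
      fix y assume y: "y \<in> VH" "y \<noteq> x"
      show "\<exists>z. EH y z \<and> g z + 1 = g y"
      proof (cases "y = Orig a")
        case True
        have "EH y x" using True xV by (simp add: x_def)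
        moreover have "g x + 1 = g y" using True d_refl[OF aV] y by (simp add: g_def)
        ultimately show ?thesis by blast
      next
        case False
        then obtain z where z: "EH y z" "fo d a z + 1 = fo d a y" using Fdesc[OF aV y(1)] by blast
        have "z \<noteq> x"
        proof
          assume "z = x"
          hence "EH x y" using EH_sym z(1) by blast
          hence "y = Orig a" using nbr_Leaf x_def by blast
          thus False using False by simp
        qed
        thus ?thesis using z y by (auto simp: g_def)
      qed
    qed
    show "y \<in> VH" by fact
  qed
  thus ?thesis by (simp add: g_def x_def)
qed

lemma gH_Sub:
  assumes xV: "Sub u v \<in> VH" and yV: "y \<in> VH"
  shows "gdist VH EH (Sub u v) y = Dm d (Sub u v) y"
proof -
  define x where "x = Sub u v"
  define x' where "x' = Sub v u"
  have e: "E u v" using xV by simp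
  have uV: "u \<in> V" and vV: "v \<in> V" using inV e by auto
  have uv: "u \<noteq> v" using e irr by auto
  have duv: "d u v \<noteq> 0" using d_zero[OF uV vV] uv by auto
  have dvu: "d v u \<noteq> 0" using d_zero[OF vV uV] uv by auto
  define h where "h y = min (fo d u y + 1) (fo d v y + 2)" for y
  define g where "g y = (if y = x then 0 else if y = x' then 1 else h y)" for y
  have hu: "h (Orig u) = 1" using d_refl[OF uV] by (simp add: h_def)
  have hv: "h (Orig v) = 2" using d_refl[OF vV] duv by (simp add: h_def)
  have hlip: "h z \<le> h y + 1" if "EH y z" for y z
    using Flip[OF uV that] Flip[OF vV that] by (simp add: h_def)
  have nx: "z = Orig u \<or> z = x'" if "EH x z" for z using nbr_Sub that x_def x'_def by blast
  have nx': "z = Orig v \<or> z = x" if "EH x' z" for z using nbr_Sub that x_def x'_def by blast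
  have xx: "x \<noteq> x'" using uv by (simp add: x_def x'_def)
  have "gdist VH EH x y = g y"
  proof (rule gdist_char)
    show "\<forall>u v. EH u v \<longrightarrow> EH v u" using EH_sym by blast
    show "\<forall>u v. EH u v \<longrightarrow> u \<in> VH \<and> v \<in> VH" using EH_in by blast
    show "x \<in> VH" using xV x_def by simp
    show "g x = 0" by (simp add: g_def)
    show "\<forall>y z. EH y z \<longrightarrow> g z \<le> g y + 1"
    proof (intro allI impI)
      fix y z assume ez: "EH y z"
      show "g z \<le> g y + 1"
      proof (cases "z = x \<or> z = x'")
        case True thus ?thesis using xx by (auto simp: g_def)
      next
        case False
        show ?thesis
        proof (cases "y = x")
          case True
          hence "z = Orig u" using nx ez False by blast
          thus ?thesis using True hu False by (simp add: g_def)
        next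
          case F2: False
          show ?thesis
          proof (cases "y = x'")
            case True
            hence "z = Orig v" using nx' ez False by blast
            thus ?thesis using True hv False xx by (simp add: g_def)
          next
            case False
            thus ?thesis using F2 \<open>\<not> (z = x \<or> z = x')\<close> hlip[OF ez] by (simp add: g_def)
          qed
        qed
      qed
    qed
    show "\<forall>y\<in>VH. y \<noteq> x \<longrightarrow> (\<exists>z. EH y z \<and> g z + 1 = g y)"
    proof (intro ballI impI)
      fix y assume y: "y \<in> VH" "y \<noteq> x"
      show "\<exists>z. EH y z \<and> g z + 1 = g y"
      proof (cases "y = x'")
        case True
        have "EH y x" using True e symE by (simp add: x_def x'_def)
        moreover have "g x + 1 = g y" using True xx by (simp add: g_def)
        ultimately show ?thesis by blast
      next
        case nx'y: False
        show ?thesis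
        proof (cases "y = Orig u")
          case True
          have "EH y x" using True e by (simp add: x_def)
          moreover have "g x + 1 = g y" using True hu by (simp add: g_def x_def x'_def)
          ultimately show ?thesis by blast
        next
          case nu: False
          show ?thesis
          proof (cases "y = Orig v")
            case True
            have "EH y x'" using True e symE by (simp add: x'_def)
            moreover have "g x' + 1 = g y" using True hv xx by (simp add: g_def x_def x'_def)
            ultimately show ?thesis by blast
          next
            case nv: False
            have gy: "g y = h y" using y nx'y by (simp add: g_def)
            have zgood: "g z + 1 = g y" if ez: "EH y z" and hz: "h z + 1 \<le> h y" for z
            proof -
              have "z \<noteq> x"
              proof
                assume "z = x" hence "EH x y" using EH_sym ez by blast
                thus False using nx nu nx'y by blast
              qed
              moreover have "z \<noteq> x'"
              proof
                assume "z = x'" hence "EH x' y" using EH_sym ez by blast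
                thus False using nx' nv y(2) by blast
              qed
              moreover have "h y \<le> h z + 1" using hlip EH_sym ez by blast
              ultimately show ?thesis using gy hz by (simp add: g_def)
            qed
            show ?thesis
            proof (cases "fo d u y + 1 \<le> fo d v y + 2")
              case True
              obtain z where z: "EH y z" "fo d u z + 1 = fo d u y" using Fdesc[OF uV y(1) nu] by blast
              have "h z + 1 \<le> h y" using z True by (simp add: h_def)
              thus ?thesis using zgood z by blast
            next
              case False
              obtain z where z: "EH y z" "fo d v z + 1 = fo d v y" using Fdesc[OF vV y(1) nv] by blast
              have "h z + 1 \<le> h y" using z False by (simp add: h_def)
              thus ?thesis using zgood z by blast
            qed
          qed
        qed
      qed
    qed
    show "y \<in> VH" by fact
  qed
  thus ?thesis by (simp add: g_def h_def x_def x'_def)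
qed

lemma gH:
  assumes "x \<in> VH" "y \<in> VH" shows "gdist VH EH x y = Dm d x y"
  using assms gH_Orig gH_Leaf gH_Sub by (cases x) auto

end



fun own :: "'a vvert \<Rightarrow> 'a" where
  "own (Orig a) = a" | "own (Leaf a i) = a" | "own (Sub a w) = a"

fun sat :: "'a vvert \<Rightarrow> int" where
  "sat (Orig a) = 0" | "sat (Leaf a i) = 1" | "sat (Sub a w) = 1"

fun pt :: "('a \<Rightarrow> 'a \<Rightarrow> nat) \<Rightarrow> 'a vvert \<Rightarrow> 'a \<Rightarrow> bool" where
  "pt dd (Sub a w) b = (dd b w < dd b a)" | "pt dd (Orig a) b = False" | "pt dd (Leaf a i) b = False"

definition Fc :: "('a \<Rightarrow> 'a \<Rightarrow> nat) \<Rightarrow> 'a vvert \<Rightarrow> 'a vvert \<Rightarrow> int" where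
  "Fc dd x y = 3 * int (dd (own x) (own y)) + sat x + sat y
     - 2 * of_bool (pt dd x (own y)) - 2 * of_bool (pt dd y (own x))"

definition Dc :: "('a \<Rightarrow> 'a \<Rightarrow> nat) \<Rightarrow> 'a vvert \<Rightarrow> 'a vvert \<Rightarrow> int" where
  "Dc dd x y = (if x = y then 0 else Fc dd x y)"

context vt
begin

lemma own_V: "x \<in> VH \<Longrightarrow> own x \<in> V"
  by (cases x) (auto dest: inV)

lemma d_edge1: "E u v \<Longrightarrow> d u v = 1"
proof -
  assume e: "E u v"
  have uV: "u \<in> V" and vV: "v \<in> V" using inV e by auto
  have "d u v \<le> d u u + 1" using d_lip[OF uV e] .
  moreover have "d u v \<noteq> 0" using d_zero[OF uV vV] e irr by auto
  ultimately show ?thesis using d_refl[OF uV] by simp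
qed

lemma fo_closed:
  assumes aV: "a \<in> V" and yV: "y \<in> VH"
  shows "int (fo d a y) = 3 * int (d a (own y)) + sat y - 2 * of_bool (pt d y a)"
proof (cases y)
  case (Sub c w)
  hence e: "E c w" using yV by simp
  from edge_step[OF aV e] show ?thesis using Sub by auto
qed auto

lemma K:
  assumes e: "E u v" and yV: "y \<in> VH" and ne: "y \<noteq> Sub v u"
    and dc: "d (own y) u = d (own y) v + 1"
  shows "pt d y u = pt d y v"
proof (cases y)
  case (Sub c w)
  have ecw: "E c w" using Sub yV by simp
  have uV: "u \<in> V" and vV: "v \<in> V" and cV: "c \<in> V" and wV: "w \<in> V" using inV e ecw by auto
  have duv: "d u v = 1" "d v u = 1" using d_edge1 e symE by auto
  have dc': "d u c = d v c + 1" using dc Sub d_sym uV vV cV by simp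
  have 1: "d u w < d u c" if "d v w < d v c"
  proof -
    have "d u w \<le> d u v + d v w" using d_tri[OF uV vV wV] .
    thus ?thesis using that duv dc' by simp
  qed
  have 2: "d v w < d v c" if pu: "d u w < d u c"
  proof (rule ccontr)
    assume nv: "\<not> d v w < d v c"
    define k where "k = d v c"
    have "d v w = k + 1" using edge_step[OF vV ecw] nv k_def by auto
    have "d u w = k" using edge_step[OF uV ecw] pu dc' k_def by auto
    show False
    proof (cases "w = u")
      case True
      hence "k = 0" using \<open>d v w = k + 1\<close> duv by simp
      hence "c = v" using d_zero[OF vV cV] k_def by simp
      thus False using ne Sub True by simp
    next
      case False
      then obtain x1 where x1: "E w x1" "d u x1 + 1 = d u w"
        using d_desc[OF uV wV] by metis
      have x1V: "x1 \<in> V" using inV x1(1) by blast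
      have "d v x1 \<le> d v u + d u x1" using d_tri[OF vV uV x1V] .
      hence "d v x1 < d v w" using x1 duv \<open>d u w = k\<close> \<open>d v w = k + 1\<close> by simp
      moreover have "d v c < d v w" using \<open>d v w = k + 1\<close> k_def by simp
      ultimately have "x1 = c" using par_unique[OF vV x1(1) symE[OF ecw]] by blast
      thus False using x1 \<open>d u w = k\<close> dc' k_def by simp
    qed
  qed
  show ?thesis using 1 2 Sub by auto
qed auto

lemma Dm_closed:
  assumes xV: "x \<in> VH" and yV: "y \<in> VH"
  shows "int (Dm d x y) = Dc d x y"
proof (cases x)
  case (Orig a)
  have aV: "a \<in> V" using xV Orig by simp
  show ?thesis
  proof (cases "y = x")
    case True thus ?thesis using Orig d_refl[OF aV] by (simp add: Dc_def)
  next
    case False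
    thus ?thesis using Orig fo_closed[OF aV yV] by (simp add: Dc_def Fc_def)
  qed
next
  case (Leaf a i)
  have aV: "a \<in> V" using xV Leaf by simp
  show ?thesis
  proof (cases "y = x")
    case True thus ?thesis using Leaf by (simp add: Dc_def)
  next
    case False
    thus ?thesis using Leaf fo_closed[OF aV yV] by (simp add: Dc_def Fc_def)
  qed
next
  case (Sub u v)
  have e: "E u v" using xV Sub by simp
  have uV: "u \<in> V" and vV: "v \<in> V" using inV e by auto
  have duv: "d u v = 1" "d v u = 1" using d_edge1 e symE by auto
  have uv: "u \<noteq> v" using e irr by auto
  show ?thesis
  proof (cases "y = x")
    case True thus ?thesis using Sub by (simp add: Dc_def)
  next
    case nx: False
    show ?thesis
    proof (cases "y = Sub v u")
      case True
      thus ?thesis using Sub uv duv d_refl[OF uV] d_refl[OF vV] by (simp add: Dc_def Fc_def)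
    next
      case ny: False
      define c where "c = own y"
      have cV: "c \<in> V" using own_V[OF yV] c_def by simp
      have fu: "int (fo d u y) = 3 * int (d c u) + sat y - 2 * of_bool (pt d y u)"
        using fo_closed[OF uV yV] d_sym[OF uV cV] c_def by simp
      have fv: "int (fo d v y) = 3 * int (d c v) + sat y - 2 * of_bool (pt d y v)"
        using fo_closed[OF vV yV] d_sym[OF vV cV] c_def by simp
      have Dm: "int (Dm d x y) = min (int (fo d u y) + 1) (int (fo d v y) + 2)"
        using Sub nx ny by simp
      have Dcv: "Dc d x y = 3 * int (d c u) + 1 + sat y - 2 * of_bool (d c v < d c u)
                   - 2 * of_bool (pt d y u)"
        using Sub nx c_def d_sym[OF uV cV] by (simp add: Dc_def Fc_def)
      from edge_step[OF cV e] show ?thesis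
      proof
        assume A: "d c v = d c u + 1"
        show ?thesis using A Dm Dcv fu fv by simp
      next
        assume B: "d c u = d c v + 1"
        have "pt d y u = pt d y v" using K[OF e yV ny] B c_def by simp
        thus ?thesis using B Dm Dcv fu fv by simp
      qed
    qed
  qed
qed

end



lemma even_sym_sum:
  fixes h :: "'b \<Rightarrow> 'b \<Rightarrow> nat"
  assumes "finite A"
  shows "(\<forall>a\<in>A. \<forall>b\<in>A. h a b = h b a) \<Longrightarrow> (\<forall>a\<in>A. h a a = 0) \<Longrightarrow> even (\<Sum>a\<in>A. \<Sum>b\<in>A. h a b)"
  using assms
proof (induction A rule: finite_induct)
  case empty thus ?case by simp
next
  case (insert x F)
  have p1: "\<forall>a\<in>F. \<forall>b\<in>F. h a b = h b a" using insert.prems(1) by blast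
  have p2: "\<forall>a\<in>F. h a a = 0" using insert.prems(2) by blast
  have IH: "even (\<Sum>a\<in>F. \<Sum>b\<in>F. h a b)" using insert.IH[OF p1 p2] .
  have "(\<Sum>a\<in>insert x F. \<Sum>b\<in>insert x F. h a b)
      = h x x + (\<Sum>b\<in>F. h x b) + (\<Sum>a\<in>F. h a x) + (\<Sum>a\<in>F. \<Sum>b\<in>F. h a b)"
    using insert.hyps by (simp add: sum.distrib)
  also have "(\<Sum>a\<in>F. h a x) = (\<Sum>b\<in>F. h x b)"
  proof (rule sum.cong)
    fix a assume "a \<in> F"
    hence ax: "a \<in> insert x F" and xx: "x \<in> insert x F" by auto
    have "\<forall>b\<in>insert x F. h a b = h b a" using insert.prems(1) ax by (rule bspec)
    thus "h a x = h x a" using xx by (rule bspec)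
  qed simp
  also have "h x x = 0" using insert.prems(2) by blast
  finally show ?case using IH by simp
qed

context vt
begin

lemma VH_decomp:
  "VH = Orig ` V \<union> (\<lambda>(u,w). Sub u w) ` (SIGMA u:V. {w\<in>V. E u w})
        \<union> (\<lambda>(v,i). Leaf v i) ` (SIGMA v:V. {..<s - degree V E v})"
proof -
  have 1: "{Sub u v | u v. E u v} = (\<lambda>(u,w). Sub u w) ` (SIGMA u:V. {w\<in>V. E u w})"
  proof (intro equalityI subsetI)
    fix x assume "x \<in> {Sub u v | u v. E u v}"
    then obtain u v where "x = Sub u v" "E u v" by blast
    thus "x \<in> (\<lambda>(u,w). Sub u w) ` (SIGMA u:V. {w\<in>V. E u w})"
      using inV by (intro image_eqI[of _ _ "(u,v)"]) auto
  next
    fix x assume "x \<in> (\<lambda>(u,w). Sub u w) ` (SIGMA u:V. {w\<in>V. E u w})"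
    thus "x \<in> {Sub u v | u v. E u v}" by auto
  qed
  have 2: "{Leaf v i | v i. v \<in> V \<and> i < s - degree V E v}
      = (\<lambda>(v,i). Leaf v i) ` (SIGMA v:V. {..<s - degree V E v})"
  proof (intro equalityI subsetI)
    fix x assume "x \<in> {Leaf v i | v i. v \<in> V \<and> i < s - degree V E v}"
    then obtain v i where "x = Leaf v i" "v \<in> V" "i < s - degree V E v" by blast
    thus "x \<in> (\<lambda>(v,i). Leaf v i) ` (SIGMA v:V. {..<s - degree V E v})"
      by (intro image_eqI[of _ _ "(v,i)"]) auto
  next
    fix x assume "x \<in> (\<lambda>(v,i). Leaf v i) ` (SIGMA v:V. {..<s - degree V E v})"
    thus "x \<in> {Leaf v i | v i. v \<in> V \<and> i < s - degree V E v}" by auto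
  qed
  show ?thesis unfolding vicsek_V_def 1 2 ..
qed

lemma sum_VH:
  fixes h :: "'a vvert \<Rightarrow> int"
  shows "(\<Sum>x\<in>VH. h x) = (\<Sum>a\<in>V. h (Orig a) + (\<Sum>w\<in>{w\<in>V. E a w}. h (Sub a w))
                                  + (\<Sum>i<s - degree V E a. h (Leaf a i)))"
proof -
  define A where "A = Orig ` V"
  define B where "B = (\<lambda>(u,w). Sub u w) ` (SIGMA u:V. {w\<in>V. E u w})"
  define C where "C = (\<lambda>(v,i). Leaf v i) ` (SIGMA v:V. {..<s - degree V E v})"
  have fA: "finite A" using finV by (simp add: A_def)
  have fS1: "finite (SIGMA u:V. {w\<in>V. E u w})" using finV by (intro finite_SigmaI) auto
  have fS2: "finite (SIGMA v:V. {..<s - degree V E v})" using finV by (intro finite_SigmaI) auto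
  have fB: "finite B" using fS1 by (simp add: B_def)
  have fC: "finite C" using fS2 by (simp add: C_def)
  have dAB: "A \<inter> B = {}" by (auto simp: A_def B_def)
  have dABC: "(A \<union> B) \<inter> C = {}" by (auto simp: A_def B_def C_def)
  have VHe: "VH = A \<union> B \<union> C" unfolding A_def B_def C_def by (rule VH_decomp)
  have "(\<Sum>x\<in>VH. h x) = sum h (A \<union> B) + sum h C"
    unfolding VHe by (rule sum.union_disjoint) (use fA fB fC dABC in auto)
  also have "sum h (A \<union> B) = sum h A + sum h B"
    by (rule sum.union_disjoint) (use fA fB dAB in auto)
  also have "sum h A = (\<Sum>a\<in>V. h (Orig a))"
    unfolding A_def by (subst sum.reindex) (auto simp: inj_on_def)
  also have "sum h B = (\<Sum>(u,w)\<in>(SIGMA u:V. {w\<in>V. E u w}). h (Sub u w))"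
    unfolding B_def by (subst sum.reindex) (auto simp: inj_on_def case_prod_beta)
  also have "\<dots> = (\<Sum>u\<in>V. \<Sum>w\<in>{w\<in>V. E u w}. h (Sub u w))"
    using finV by (subst sum.Sigma) auto
  also have "sum h C = (\<Sum>(v,i)\<in>(SIGMA v:V. {..<s - degree V E v}). h (Leaf v i))"
    unfolding C_def by (subst sum.reindex) (auto simp: inj_on_def case_prod_beta)
  also have "\<dots> = (\<Sum>v\<in>V. \<Sum>i<s - degree V E v. h (Leaf v i))"
    using finV by (subst sum.Sigma) auto
  finally show ?thesis by (simp add: sum.distrib)
qed

lemma deg_card: "a \<in> V \<Longrightarrow> int (card {w\<in>V. E a w}) + int (s - degree V E a) = int s"
  using degs by (simp add: degree_def)

lemma S1:
  fixes \<phi> :: "'a \<Rightarrow> int"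
  shows "(\<Sum>x\<in>VH. \<phi> (own x)) = (int s + 1) * (\<Sum>a\<in>V. \<phi> a)"
proof -
  have "(\<Sum>x\<in>VH. \<phi> (own x)) = (\<Sum>a\<in>V. \<phi> a + int (card {w\<in>V. E a w}) * \<phi> a
      + int (s - degree V E a) * \<phi> a)"
    by (simp add: sum_VH)
  also have "\<dots> = (\<Sum>a\<in>V. (int s + 1) * \<phi> a)"
  proof (rule sum.cong)
    fix a assume "a \<in> V"
    from deg_card[OF this] show "\<phi> a + int (card {w\<in>V. E a w}) * \<phi> a + int (s - degree V E a) * \<phi> a
      = (int s + 1) * \<phi> a"
    proof -
      assume h: "int (card {w\<in>V. E a w}) + int (s - degree V E a) = int s"
      have "\<phi> a + int (card {w\<in>V. E a w}) * \<phi> a + int (s - degree V E a) * \<phi> a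
          = (1 + (int (card {w\<in>V. E a w}) + int (s - degree V E a))) * \<phi> a"
        by (simp add: algebra_simps)
      thus ?thesis using h by simp
    qed
  qed simp
  finally show ?thesis by (simp add: sum_distrib_left)
qed

lemma card_VH: "int (card VH) = (int s + 1) * int (card V)"
  using S1[of "\<lambda>_. 1"] by simp

lemma S2: "(\<Sum>x\<in>VH. sat x) = int s * int (card V)"
proof -
  have "(\<Sum>x\<in>VH. sat x) = (\<Sum>a\<in>V. int (card {w\<in>V. E a w}) + int (s - degree V E a))"
    by (simp add: sum_VH)
  also have "\<dots> = (\<Sum>a\<in>V. int s)" using deg_card by (intro sum.cong) auto
  finally show ?thesis by simp
qed

lemma card_down:
  assumes bV: "b \<in> V" and aV: "a \<in> V"
  shows "card ({w\<in>V. E a w} \<inter> {w. d b w < d b a}) = (if a = b then 0 else 1)"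
proof (cases "a = b")
  case True thus ?thesis using d_refl[OF bV] by simp
next
  case False
  hence "b \<noteq> a" by simp
  then obtain z where z: "E a z" "d b z + 1 = d b a" using d_desc[OF bV aV] by blast
  have "{w\<in>V. E a w} \<inter> {w. d b w < d b a} = {z}"
  proof
    show "{z} \<subseteq> {w\<in>V. E a w} \<inter> {w. d b w < d b a}" using z inV by auto
    show "{w\<in>V. E a w} \<inter> {w. d b w < d b a} \<subseteq> {z}"
    proof
      fix w assume "w \<in> {w\<in>V. E a w} \<inter> {w. d b w < d b a}"
      hence "E a w" "d b w < d b a" by auto
      thus "w \<in> {z}" using par_unique[OF bV _ z(1)] z by auto
    qed
  qed
  thus ?thesis using False by simp
qed

lemma S3:
  assumes bV: "b \<in> V"
  shows "(\<Sum>x\<in>VH. of_bool (pt d x b) :: int) = int (card V) - 1"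
proof -
  have "(\<Sum>x\<in>VH. of_bool (pt d x b) :: int)
      = (\<Sum>a\<in>V. int (card ({w\<in>V. E a w} \<inter> {w. d b w < d b a})))"
    using finV by (simp add: sum_VH)
  also have "\<dots> = (\<Sum>a\<in>V. 1 - of_bool (a = b))"
    using card_down[OF bV] by (intro sum.cong) auto
  also have "\<dots> = int (card V) - 1" using bV finV by (simp add: sum_subtractf)
  finally show ?thesis .
qed

lemma Fc_diag:
  assumes "x \<in> VH" shows "Fc d x x = 2 * sat x"
proof -
  have "d (own x) (own x) = 0" using d_refl own_V assms by blast
  thus ?thesis by (cases x) (auto simp: Fc_def)
qed

lemma main_sum:
  defines "n \<equiv> int (card V)" and "S \<equiv> (\<Sum>a\<in>V. \<Sum>b\<in>V. int (d a b))"
  shows "(\<Sum>x\<in>VH. \<Sum>y\<in>VH. Dc d x y)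
    = 3 * (int s + 1)^2 * S + 2 * (int s + 1) * int s * n^2 - 4 * (int s + 1) * n * (n - 1) - 2 * int s * n"
proof -
  have finVH: "finite VH" using VH_decomp finV by auto
  have Dc_eq: "Dc d x y = Fc d x y - (if y = x then 2 * sat x else 0)" if "x \<in> VH" for x y
    using that
    using Fc_diag by (auto simp: Dc_def)
  have "(\<Sum>x\<in>VH. \<Sum>y\<in>VH. Dc d x y) = (\<Sum>x\<in>VH. (\<Sum>y\<in>VH. Fc d x y) - 2 * sat x)"
  proof (rule sum.cong)
    fix x assume x: "x \<in> VH"
    have "(\<Sum>y\<in>VH. Dc d x y) = (\<Sum>y\<in>VH. Fc d x y) - (\<Sum>y\<in>VH. (if y = x then 2 * sat x else 0))"
      using Dc_eq[OF x] by (simp add: sum_subtractf)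
    also have "(\<Sum>y\<in>VH. (if y = x then 2 * sat x else 0)) = 2 * sat x"
      using finVH x by (simp add: sum.delta)
    finally show "(\<Sum>y\<in>VH. Dc d x y) = (\<Sum>y\<in>VH. Fc d x y) - 2 * sat x" .
  qed simp
  also have "\<dots> = (\<Sum>x\<in>VH. \<Sum>y\<in>VH. Fc d x y) - 2 * (\<Sum>x\<in>VH. sat x)"
    by (simp add: sum_subtractf sum_distrib_left)
  also have "(\<Sum>x\<in>VH. \<Sum>y\<in>VH. Fc d x y)
     = 3 * (\<Sum>x\<in>VH. \<Sum>y\<in>VH. int (d (own x) (own y)))
       + (\<Sum>x\<in>VH. \<Sum>y\<in>VH. sat x) + (\<Sum>x\<in>VH. \<Sum>y\<in>VH. sat y)
       - 2 * (\<Sum>x\<in>VH. \<Sum>y\<in>VH. of_bool (pt d x (own y)))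
       - 2 * (\<Sum>x\<in>VH. \<Sum>y\<in>VH. of_bool (pt d y (own x)))"
    unfolding Fc_def by (simp only: sum.distrib sum_subtractf sum_distrib_left[symmetric])
  also have "(\<Sum>x\<in>VH. \<Sum>y\<in>VH. int (d (own x) (own y))) = (int s + 1)^2 * S"
  proof -
    have "(\<Sum>x\<in>VH. \<Sum>y\<in>VH. int (d (own x) (own y)))
        = (\<Sum>x\<in>VH. (int s + 1) * (\<Sum>b\<in>V. int (d (own x) b)))"
      by (rule sum.cong) (rule refl, rule S1[of "\<lambda>b. int (d (own _) b)"])
    also have "\<dots> = (int s + 1) * (\<Sum>x\<in>VH. (\<Sum>b\<in>V. int (d (own x) b)))"
      by (simp only: sum_distrib_left)
    also have "(\<Sum>x\<in>VH. (\<Sum>b\<in>V. int (d (own x) b))) = (int s + 1) * S"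
      unfolding S_def by (rule S1[of "\<lambda>a. \<Sum>b\<in>V. int (d a b)"])
    finally show ?thesis by (simp add: power2_eq_square)
  qed
  also have "(\<Sum>x\<in>VH. \<Sum>y\<in>VH. sat x) = int s * n * ((int s + 1) * n)"
  proof -
    have "(\<Sum>x\<in>VH. \<Sum>y\<in>VH. sat x) = (\<Sum>x\<in>VH. int (card VH) * sat x)" by simp
    also have "\<dots> = int (card VH) * (\<Sum>x\<in>VH. sat x)" by (simp only: sum_distrib_left)
    finally show ?thesis using S2 card_VH n_def by simp
  qed
  also have "(\<Sum>x\<in>VH. \<Sum>y\<in>VH. sat y) = int s * n * ((int s + 1) * n)"
  proof -
    have "(\<Sum>x\<in>VH. \<Sum>y\<in>VH. sat y) = (\<Sum>x\<in>VH. int s * n)" using S2 n_def by simp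
    also have "\<dots> = int (card VH) * (int s * n)" by simp
    finally show ?thesis using card_VH n_def by simp
  qed
  also have "(\<Sum>x\<in>VH. \<Sum>y\<in>VH. of_bool (pt d x (own y)) :: int) = (int s + 1) * n * (n - 1)"
  proof -
    have "(\<Sum>x\<in>VH. \<Sum>y\<in>VH. of_bool (pt d x (own y)) :: int)
        = (\<Sum>x\<in>VH. (int s + 1) * (\<Sum>b\<in>V. of_bool (pt d x b)))"
      by (rule sum.cong) (rule refl, rule S1[of "\<lambda>b. of_bool (pt d _ b)"])
    also have "\<dots> = (int s + 1) * (\<Sum>x\<in>VH. \<Sum>b\<in>V. of_bool (pt d x b))"
      by (simp only: sum_distrib_left)
    also have "(\<Sum>x\<in>VH. \<Sum>b\<in>V. of_bool (pt d x b) :: int) = (\<Sum>b\<in>V. \<Sum>x\<in>VH. of_bool (pt d x b))"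
      by (rule sum.swap)
    also have "\<dots> = (\<Sum>b\<in>V. n - 1)"
      using S3 n_def by simp
    also have "\<dots> = n * (n - 1)" using n_def by simp
    finally show ?thesis by simp
  qed
  also have "(\<Sum>x\<in>VH. \<Sum>y\<in>VH. of_bool (pt d y (own x)) :: int) = (int s + 1) * n * (n - 1)"
  proof -
    have "(\<Sum>x\<in>VH. \<Sum>y\<in>VH. of_bool (pt d y (own x)) :: int) = (\<Sum>x\<in>VH. n - 1)"
      by (rule sum.cong) (simp_all add: S3 own_V n_def)
    also have "\<dots> = int (card VH) * (n - 1)" by simp
    finally show ?thesis using card_VH n_def by simp
  qed
  finally show ?thesis using S2 n_def by (simp add: algebra_simps power2_eq_square)
qed

end


theorem theorem2:
  fixes s :: nat and V :: "'a set" and E :: "'a \<Rightarrow> 'a \<Rightarrow> bool"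
  assumes "s \<ge> 2"
    and "is_tree V E"
    and "\<forall>v\<in>V. degree V E v \<le> s"
  shows "int (wiener (vicsek_V s V E) (vicsek_E s V E))
         = 3 * (int s + 1)^2 * int (wiener V E)
           + (int s ^ 2 - int s - 2) * (int (card V))^2 + (int s + 2) * int (card V)"
proof -
  interpret vt V E s
    by unfold_locales (use assms(2,3) in auto)
  define n where "n = int (card V)"
  define Snat where "Snat = (\<Sum>a\<in>V. \<Sum>b\<in>V. d a b)"
  have sy: "\<forall>a\<in>V. \<forall>b\<in>V. d a b = d b a" using d_sym by blast
  have rf: "\<forall>a\<in>V. d a a = 0" using d_refl by blast
  have ev: "even Snat" unfolding Snat_def using even_sym_sum[OF finV sy rf] .
  have W: "int Snat = 2 * int (wiener V E)"
  proof -
    have w: "wiener V E = Snat div 2" unfolding wiener_def Snat_def ..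
    have e2: "2 * (Snat div 2) = Snat" using ev by simp
    have "int Snat = int (2 * wiener V E)" using e2 w by simp
    thus ?thesis by simp
  qed
  have SS: "(\<Sum>a\<in>V. \<Sum>b\<in>V. int (d a b)) = int Snat" unfolding Snat_def by (simp add: of_nat_sum)
  define SH where "SH = (\<Sum>x\<in>VH. \<Sum>y\<in>VH. gdist VH EH x y)"
  have SHD: "int SH = (\<Sum>x\<in>VH. \<Sum>y\<in>VH. Dc d x y)"
  proof -
    have "int SH = (\<Sum>x\<in>VH. \<Sum>y\<in>VH. int (gdist VH EH x y))" unfolding SH_def by (simp add: of_nat_sum)
    also have "\<dots> = (\<Sum>x\<in>VH. \<Sum>y\<in>VH. Dc d x y)"
    proof (rule sum.cong[OF refl], rule sum.cong[OF refl])
      fix x y assume "x \<in> VH" "y \<in> VH"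
      thus "int (gdist VH EH x y) = Dc d x y" using gH Dm_closed by simp
    qed
    finally show ?thesis .
  qed
  have main: "int SH = 3 * (int s + 1)^2 * int Snat + 2 * (int s + 1) * int s * n^2
      - 4 * (int s + 1) * n * (n - 1) - 2 * int s * n"
    using SHD main_sum SS n_def by simp
  define K where "K = 3 * (int s + 1)^2 * int (wiener V E) + (int s + 1) * int s * n^2
      - 2 * (int s + 1) * n * (n - 1) - int s * n"
  have "int SH = 2 * K" unfolding K_def using main W by (simp add: algebra_simps)
  hence "int (wiener VH EH) = K" unfolding wiener_def SH_def[symmetric] by (simp add: zdiv_int)
  thus ?thesis unfolding K_def n_def by (simp add: algebra_simps power2_eq_square)
qed

end
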